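(* Let $f:(k+1)^V\to\mathbb{R}$ be monotone $k$-submodular with all marginal values $\Delta_{e,j}f(S)\in[0,1]$, let $F$ be its multilinear extension, and write $F_{i,j}=\partial F/\partial x_{i,j}$. Let $x\in\mathcal P$, let $(i_1,j_1),(i_2,j_2)\in[n]\times[k]$ be two distinct coordinates, let $\beta,\gamma\ge0$ with $0<\beta+\gamma\le1$, and suppose $x+\beta(e_{i_1,j_1}-e_{i_2,j_2})\in\mathcal P$ and $x-\gamma(e_{i_1,j_1}-e_{i_2,j_2})\in\mathcal P$. Let $x'$ be the random point equal to $x+\beta(e_{i_1,j_1}-e_{i_2,j_2})$ with probability $\frac{\gamma}{\beta+\gamma}$ and to $x-\gamma(e_{i_1,j_1}-e_{i_2,j_2})$ with probability $\frac{\beta}{\beta+\gamma}$. Then for every $\lambda\in[0,1]$, $$\mathbb{E}\big[e^{\lambda(F(x)-F(x'))}\big]\le e^{\lambda^2\beta\gamma\,(F_{i_2,j_2}(x)-F_{i_1,j_1}(x))^2}.$$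
   Context: Let $V=[n]=\{1,\dots,n\}$ and let $k\ge 1$ be an integer. Write $(k+1)^V$ for the set of $k$-tuples $S=(S_1,\dots,S_k)$ of pairwise disjoint subsets of $V$. For $S,T\in(k+1)^V$ let $S\sqcap T=(S_1\cap T_1,\dots,S_k\cap T_k)$ and let $S\sqcup T$ be the tuple whose $j$-th component is $(S_j\cup T_j)\setminus\bigcup_{l\neq j}(S_l\cup T_l)$. A function $f:(k+1)^V\to\mathbb{R}$ is $k$-submodular if $f(S)+f(T)\ge f(S\sqcap T)+f(S\sqcup T)$ for all $S,T\in(k+1)^V$. Write $S\preceq T$ if $S_j\subseteq T_j$ for all $j$; $f$ is monotone if $S\preceq T$ implies $f(S)\le f(T)$. For $e\notin\bigcup_l S_l$ and $j\in[k]$, $\Delta_{e,j}f(S)=f(S_1,\dots,S_{j-1},S_j\cup\{e\},S_{j+1},\dots,S_k)-f(S)$. Let $\mathcal P=\{x\in[0,1]^{n\times k}:\sum_{j=1}^k x_{i,j}\le 1\ \forall i\in[n]\}$. The multilinear extension of $f$ is the polynomial $F(x)=\sum_{S\in(k+1)^V} f(S_1,\dots,S_k)\Big(\prod_{j\in[k]}\prod_{i\in S_j}x_{i,j}\Big)\prod_{i\in V\setminus\bigcup_j S_j}\Big(1-\sum_{j=1}^k x_{i,j}\Big)$, considered on $\mathcal P$. $e_{i,j}$ denotes the standard basis vector of $\mathbb{R}^{n\times k}$ at coordinate $(i,j)$. *)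

theory Defs
  imports "HOL-Analysis.Analysis"
begin

text \<open>A k-tuple S = (S_1,...,S_k) of pairwise disjoint subsets of V = {1..n} is represented
  as a function S :: nat \<Rightarrow> nat set, with S j the j-th component for j in {1..k}
  and S j = {} for j outside {1..k}.\<close>

definition ktuples :: "nat \<Rightarrow> nat \<Rightarrow> (nat \<Rightarrow> nat set) set" where
  "ktuples n k = {S. (\<forall>j\<in>{1..k}. S j \<subseteq> {1..n}) \<and> (\<forall>j. j \<notin> {1..k} \<longrightarrow> S j = {})
                   \<and> (\<forall>j\<in>{1..k}. \<forall>l\<in>{1..k}. j \<noteq> l \<longrightarrow> S j \<inter> S l = {})}"

definition tmeet :: "nat \<Rightarrow> (nat \<Rightarrow> nat set) \<Rightarrow> (nat \<Rightarrow> nat set) \<Rightarrow> (nat \<Rightarrow> nat set)" where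
  "tmeet k S T = (\<lambda>j. if j \<in> {1..k} then S j \<inter> T j else {})"

definition tjoin :: "nat \<Rightarrow> (nat \<Rightarrow> nat set) \<Rightarrow> (nat \<Rightarrow> nat set) \<Rightarrow> (nat \<Rightarrow> nat set)" where
  "tjoin k S T = (\<lambda>j. if j \<in> {1..k}
      then (S j \<union> T j) - (\<Union>l\<in>{1..k} - {j}. S l \<union> T l) else {})"

definition tle :: "nat \<Rightarrow> (nat \<Rightarrow> nat set) \<Rightarrow> (nat \<Rightarrow> nat set) \<Rightarrow> bool" where
  "tle k S T \<longleftrightarrow> (\<forall>j\<in>{1..k}. S j \<subseteq> T j)"

definition k_submodular :: "nat \<Rightarrow> nat \<Rightarrow> ((nat \<Rightarrow> nat set) \<Rightarrow> real) \<Rightarrow> bool" where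
  "k_submodular n k f \<longleftrightarrow> (\<forall>S\<in>ktuples n k. \<forall>T\<in>ktuples n k.
      f S + f T \<ge> f (tmeet k S T) + f (tjoin k S T))"

definition k_monotone :: "nat \<Rightarrow> nat \<Rightarrow> ((nat \<Rightarrow> nat set) \<Rightarrow> real) \<Rightarrow> bool" where
  "k_monotone n k f \<longleftrightarrow> (\<forall>S\<in>ktuples n k. \<forall>T\<in>ktuples n k. tle k S T \<longrightarrow> f S \<le> f T)"

text \<open>Marginal value Delta_{e,j} f(S) (meaningful for e not in the support of S, j in {1..k}).\<close>
definition marginal :: "((nat \<Rightarrow> nat set) \<Rightarrow> real) \<Rightarrow> nat \<Rightarrow> nat \<Rightarrow> (nat \<Rightarrow> nat set) \<Rightarrow> real" where
  "marginal f e j S = f (S(j := insert e (S j))) - f S"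

definition support :: "nat \<Rightarrow> (nat \<Rightarrow> nat set) \<Rightarrow> nat set" where
  "support k S = (\<Union>l\<in>{1..k}. S l)"

text \<open>Points of R^{n x k} as functions x i j; only coordinates i in {1..n}, j in {1..k} matter.\<close>
definition polytopeP :: "nat \<Rightarrow> nat \<Rightarrow> (nat \<Rightarrow> nat \<Rightarrow> real) \<Rightarrow> bool" where
  "polytopeP n k x \<longleftrightarrow> (\<forall>i\<in>{1..n}. (\<forall>j\<in>{1..k}. 0 \<le> x i j \<and> x i j \<le> 1)
                          \<and> (\<Sum>j\<in>{1..k}. x i j) \<le> 1)"

definition multilinear_ext :: "nat \<Rightarrow> nat \<Rightarrow> ((nat \<Rightarrow> nat set) \<Rightarrow> real) \<Rightarrow> (nat \<Rightarrow> nat \<Rightarrow> real) \<Rightarrow> real" where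
  "multilinear_ext n k f x = (\<Sum>S\<in>ktuples n k.
      f S * (\<Prod>j\<in>{1..k}. \<Prod>i\<in>S j. x i j)
          * (\<Prod>i\<in>{1..n} - support k S. 1 - (\<Sum>j\<in>{1..k}. x i j)))"

definition ebasis :: "nat \<Rightarrow> nat \<Rightarrow> (nat \<Rightarrow> nat \<Rightarrow> real)" where
  "ebasis i j = (\<lambda>a b. if a = i \<and> b = j then 1 else 0)"

definition partial :: "((nat \<Rightarrow> nat \<Rightarrow> real) \<Rightarrow> real) \<Rightarrow> nat \<Rightarrow> nat \<Rightarrow> (nat \<Rightarrow> nat \<Rightarrow> real) \<Rightarrow> real" where
  "partial G i j x = deriv (\<lambda>t. G (\<lambda>a b. x a b + t * ebasis i j a b)) 0"

end

theory Submission imports Defs begin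

definition tup :: "nat \<Rightarrow> nat \<Rightarrow> (nat \<Rightarrow> nat) \<Rightarrow> (nat \<Rightarrow> nat set)" where
  "tup n k \<sigma> = (\<lambda>j. if j \<in> {1..k} then {i\<in>{1..n}. \<sigma> i = j} else {})"

definition pw :: "nat \<Rightarrow> (nat \<Rightarrow> nat \<Rightarrow> real) \<Rightarrow> nat \<Rightarrow> nat \<Rightarrow> real" where
  "pw k x i l = (if l = 0 then 1 - (\<Sum>j\<in>{1..k}. x i j) else x i l)"

lemma tup_out: assumes "j \<notin> {1..k}" shows "tup n k \<sigma> j = {}"
  unfolding tup_def by (simp only: if_not_P[OF assms])

lemma tup_ktuples: "tup n k \<sigma> \<in> ktuples n k"
  unfolding tup_def ktuples_def by auto

lemma support_tup: "support k (tup n k \<sigma>) = {i\<in>{1..n}. \<sigma> i \<in> {1..k}}"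
  unfolding support_def tup_def by auto

lemma tup_inj: "inj_on (tup n k) ({1..n} \<rightarrow>\<^sub>E {0..k})"
proof (rule inj_onI)
  fix \<sigma> \<tau> assume s: "\<sigma> \<in> {1..n} \<rightarrow>\<^sub>E {0..k}" and t: "\<tau> \<in> {1..n} \<rightarrow>\<^sub>E {0..k}"
    and eq: "tup n k \<sigma> = tup n k \<tau>"
  show "\<sigma> = \<tau>"
  proof (rule ext)
    fix i show "\<sigma> i = \<tau> i"
    proof (cases "i \<in> {1..n}")
      case False then show ?thesis using s t by (auto simp: PiE_def extensional_def)
    next
      case True
      have si: "\<sigma> i \<in> {0..k}" "\<tau> i \<in> {0..k}" using s t True by auto
      show ?thesis
      proof (cases "\<sigma> i = 0")
        case True2: True
        show ?thesis
        proof (rule ccontr)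
          assume "\<sigma> i \<noteq> \<tau> i"
          hence "\<tau> i \<in> {1..k}" using si True2 by auto
          hence "i \<in> tup n k \<tau> (\<tau> i)" using True by (auto simp: tup_def)
          hence "i \<in> tup n k \<sigma> (\<tau> i)" using eq by simp
          thus False using True2 \<open>\<sigma> i \<noteq> \<tau> i\<close> by (auto simp: tup_def split: if_splits)
        qed
      next
        case False
        hence "\<sigma> i \<in> {1..k}" using si by auto
        hence "i \<in> tup n k \<sigma> (\<sigma> i)" using True by (auto simp: tup_def)
        hence "i \<in> tup n k \<tau> (\<sigma> i)" using eq by simp
        thus ?thesis by (auto simp: tup_def split: if_splits)
      qed
    qed
  qed
qed

lemma tup_surj: "tup n k ` ({1..n} \<rightarrow>\<^sub>E {0..k}) = ktuples n k"
proof
  show "tup n k ` ({1..n} \<rightarrow>\<^sub>E {0..k}) \<subseteq> ktuples n k" using tup_ktuples by auto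
next
  show "ktuples n k \<subseteq> tup n k ` ({1..n} \<rightarrow>\<^sub>E {0..k})"
  proof
    fix S assume S: "S \<in> ktuples n k"
    define \<sigma> where "\<sigma> = (\<lambda>i. if i \<in> {1..n} then (if \<exists>j\<in>{1..k}. i \<in> S j then (SOME j. j\<in>{1..k} \<and> i \<in> S j) else 0) else undefined)"
    have uniq: "\<And>i j. j \<in> {1..k} \<Longrightarrow> i \<in> S j \<Longrightarrow> \<sigma> i = j"
    proof -
      fix i j assume j: "j \<in> {1..k}" "i \<in> S j"
      hence i: "i \<in> {1..n}" using S unfolding ktuples_def by blast
      have ex: "\<exists>j\<in>{1..k}. i \<in> S j" using j by blast
      have "(SOME j. j\<in>{1..k} \<and> i \<in> S j) \<in> {1..k} \<and> i \<in> S (SOME j. j\<in>{1..k} \<and> i \<in> S j)"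
        by (rule someI_ex) (use ex in blast)
      hence "(SOME j. j\<in>{1..k} \<and> i \<in> S j) = j"
        using S j unfolding ktuples_def by blast
      thus "\<sigma> i = j" using i ex by (simp add: \<sigma>_def)
    qed
    have sig: "\<sigma> \<in> {1..n} \<rightarrow>\<^sub>E {0..k}"
    proof -
      have "\<sigma> i \<in> {0..k}" if "i \<in> {1..n}" for i
      proof (cases "\<exists>j\<in>{1..k}. i \<in> S j")
        case True then obtain j where "j \<in> {1..k}" "i \<in> S j" by blast
        thus ?thesis using uniq by auto
      next
        case False thus ?thesis using that by (simp add: \<sigma>_def)
      qed
      moreover have "\<sigma> i = undefined" if "i \<notin> {1..n}" for i unfolding \<sigma>_def by (simp only: if_not_P[OF that])
      ultimately show ?thesis by (simp add: PiE_def extensional_def Pi_def)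
    qed
    have "tup n k \<sigma> = S"
    proof (rule ext)
      fix j show "tup n k \<sigma> j = S j"
      proof (cases "j \<in> {1..k}")
        case False
        have "S j = {}" using S False unfolding ktuples_def by blast
        moreover have "tup n k \<sigma> j = {}" using False by (rule tup_out)
        ultimately show ?thesis by simp
      next
        case True
        have "i \<in> S j" if "i \<in> {1..n}" "\<sigma> i = j" for i
        proof -
          have "\<exists>j\<in>{1..k}. i \<in> S j"
          proof (rule ccontr)
            assume "\<not> (\<exists>j\<in>{1..k}. i \<in> S j)"
            hence "\<sigma> i = 0" using that(1) by (simp add: \<sigma>_def)
            thus False using that(2) True by simp
          qed
          then obtain j' where j': "j' \<in> {1..k}" "i \<in> S j'" by blast
          thus ?thesis using uniq[OF j'] that by simp
        qed
        moreover have "S j \<subseteq> {1..n}" using S True by (auto simp: ktuples_def)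
        moreover have "tup n k \<sigma> j = {i\<in>{1..n}. \<sigma> i = j}" using True by (simp add: tup_def)
        ultimately show ?thesis using True uniq by blast
      qed
    qed
    thus "S \<in> tup n k ` ({1..n} \<rightarrow>\<^sub>E {0..k})" using sig by blast
  qed
qed

lemma prodterm:
  assumes s: "\<sigma> \<in> {1..n} \<rightarrow>\<^sub>E {0..k}"
  shows "(\<Prod>j\<in>{1..k}. \<Prod>i\<in>tup n k \<sigma> j. x i j) * (\<Prod>i\<in>{1..n} - support k (tup n k \<sigma>). 1 - (\<Sum>j\<in>{1..k}. x i j))
        = (\<Prod>i\<in>{1..n}. pw k x i (\<sigma> i))"
proof -
  define S1 where "S1 = {i\<in>{1..n}. \<sigma> i \<noteq> 0}"
  have sup: "support k (tup n k \<sigma>) = S1" using s unfolding support_tup S1_def by auto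
  have "(\<Prod>i\<in>{1..n}. pw k x i (\<sigma> i)) = (\<Prod>i\<in>{1..n} \<inter> S1. pw k x i (\<sigma> i)) * (\<Prod>i\<in>{1..n} - S1. pw k x i (\<sigma> i))"
    by (rule prod.Int_Diff) simp
  also have "(\<Prod>i\<in>{1..n} - S1. pw k x i (\<sigma> i)) = (\<Prod>i\<in>{1..n} - S1. 1 - (\<Sum>j\<in>{1..k}. x i j))"
    by (rule prod.cong) (auto simp: S1_def pw_def)
  also have "(\<Prod>i\<in>{1..n} \<inter> S1. pw k x i (\<sigma> i)) = (\<Prod>i\<in>S1. x i (\<sigma> i))"
    by (rule prod.cong) (auto simp: S1_def pw_def)
  also have "\<dots> = (\<Prod>j\<in>{1..k}. \<Prod>i\<in>{i. i \<in> S1 \<and> \<sigma> i = j}. x i (\<sigma> i))"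
    by (rule prod.group[symmetric]) (use s in \<open>auto simp: S1_def\<close>)
  also have "\<dots> = (\<Prod>j\<in>{1..k}. \<Prod>i\<in>tup n k \<sigma> j. x i j)"
    by (rule prod.cong[OF refl], rule prod.cong) (auto simp: S1_def tup_def)
  finally show ?thesis using sup by simp
qed

definition Phi :: "nat \<Rightarrow> nat \<Rightarrow> ((nat \<Rightarrow> nat set) \<Rightarrow> real) \<Rightarrow> (nat \<Rightarrow> nat \<Rightarrow> real) \<Rightarrow> real" where
  "Phi n k f p = (\<Sum>\<sigma>\<in>{1..n} \<rightarrow>\<^sub>E {0..k}. f (tup n k \<sigma>) * (\<Prod>i\<in>{1..n}. p i (\<sigma> i)))"

lemma multilin_Phi: "multilinear_ext n k f x = Phi n k f (pw k x)"
proof -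
  have "multilinear_ext n k f x = (\<Sum>\<sigma>\<in>{1..n} \<rightarrow>\<^sub>E {0..k}. f (tup n k \<sigma>) *
      (\<Prod>j\<in>{1..k}. \<Prod>i\<in>tup n k \<sigma> j. x i j) * (\<Prod>i\<in>{1..n} - support k (tup n k \<sigma>). 1 - (\<Sum>j\<in>{1..k}. x i j)))"
    unfolding multilinear_ext_def tup_surj[symmetric]
    by (subst sum.reindex[OF tup_inj]) (simp add: comp_def)
  also have "\<dots> = Phi n k f (pw k x)"
    unfolding Phi_def
  proof (rule sum.cong[OF refl])
    fix \<sigma> assume h: "\<sigma> \<in> {1..n} \<rightarrow>\<^sub>E {0..k}"
    have e: "(\<Prod>j\<in>{1..k}. \<Prod>i\<in>tup n k \<sigma> j. x i j) * (\<Prod>i\<in>{1..n} - support k (tup n k \<sigma>). 1 - (\<Sum>j\<in>{1..k}. x i j))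
        = (\<Prod>i\<in>{1..n}. pw k x i (\<sigma> i))" by (rule prodterm[OF h])
    show "f (tup n k \<sigma>) * (\<Prod>j\<in>{1..k}. \<Prod>i\<in>tup n k \<sigma> j. x i j) * (\<Prod>i\<in>{1..n} - support k (tup n k \<sigma>). 1 - (\<Sum>j\<in>{1..k}. x i j))
        = f (tup n k \<sigma>) * (\<Prod>i\<in>{1..n}. pw k x i (\<sigma> i))"
      by (simp only: mult.assoc e)
  qed
  finally show ?thesis .
qed

lemma sum_PiE_insert:
  assumes "finite A" "i0 \<notin> A"
  shows "(\<Sum>\<sigma>\<in>insert i0 A \<rightarrow>\<^sub>E B. G \<sigma>) = (\<Sum>a\<in>B. \<Sum>\<sigma>\<in>A \<rightarrow>\<^sub>E B. G (\<sigma>(i0:=a)))"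
proof -
  have "(\<Sum>\<sigma>\<in>insert i0 A \<rightarrow>\<^sub>E B. G \<sigma>) = (\<Sum>z\<in>B \<times> (A \<rightarrow>\<^sub>E B). G ((\<lambda>(y, g). g(i0 := y)) z))"
    unfolding PiE_insert_eq
    by (subst sum.reindex[OF inj_combinator[OF assms(2)]]) (simp add: comp_def)
  also have "\<dots> = (\<Sum>a\<in>B. \<Sum>\<sigma>\<in>A \<rightarrow>\<^sub>E B. G (\<sigma>(i0:=a)))"
    by (simp add: sum.cartesian_product case_prod_beta)
  finally show ?thesis .
qed

lemma prod_upd:
  assumes "finite A" "i0 \<notin> A"
  shows "(\<Prod>i\<in>insert i0 A. p i ((\<sigma>(i0:=a)) i)) = p i0 a * (\<Prod>i\<in>A. p i (\<sigma> i))"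
proof -
  have "(\<Prod>i\<in>A. p i ((\<sigma>(i0:=a)) i)) = (\<Prod>i\<in>A. p i (\<sigma> i))"
    by (rule prod.cong) (use assms in auto)
  thus ?thesis using assms by simp
qed

definition Psi1 :: "nat \<Rightarrow> nat \<Rightarrow> ((nat \<Rightarrow> nat set) \<Rightarrow> real) \<Rightarrow> (nat \<Rightarrow> nat \<Rightarrow> real) \<Rightarrow> nat \<Rightarrow> nat \<Rightarrow> real" where
  "Psi1 n k f p i1 a = (\<Sum>\<sigma>\<in>({1..n} - {i1}) \<rightarrow>\<^sub>E {0..k}. f (tup n k (\<sigma>(i1:=a))) * (\<Prod>i\<in>{1..n} - {i1}. p i (\<sigma> i)))"

definition Psi2 :: "nat \<Rightarrow> nat \<Rightarrow> ((nat \<Rightarrow> nat set) \<Rightarrow> real) \<Rightarrow> (nat \<Rightarrow> nat \<Rightarrow> real) \<Rightarrow> nat \<Rightarrow> nat \<Rightarrow> nat \<Rightarrow> nat \<Rightarrow> real" where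
  "Psi2 n k f p i1 i2 a b = (\<Sum>\<sigma>\<in>({1..n} - {i1} - {i2}) \<rightarrow>\<^sub>E {0..k}.
       f (tup n k (\<sigma>(i2:=b, i1:=a))) * (\<Prod>i\<in>{1..n} - {i1} - {i2}. p i (\<sigma> i)))"

lemma sum_PiE_remove:
  assumes "finite A" "i0 \<in> A"
  shows "(\<Sum>\<sigma>\<in>A \<rightarrow>\<^sub>E B. G \<sigma>) = (\<Sum>a\<in>B. \<Sum>\<sigma>\<in>(A - {i0}) \<rightarrow>\<^sub>E B. G (\<sigma>(i0:=a)))"
proof -
  have "A = insert i0 (A - {i0})" using assms by auto
  hence "(\<Sum>\<sigma>\<in>A \<rightarrow>\<^sub>E B. G \<sigma>) = (\<Sum>\<sigma>\<in>insert i0 (A - {i0}) \<rightarrow>\<^sub>E B. G \<sigma>)" by simp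
  also have "\<dots> = (\<Sum>a\<in>B. \<Sum>\<sigma>\<in>(A - {i0}) \<rightarrow>\<^sub>E B. G (\<sigma>(i0:=a)))"
    by (rule sum_PiE_insert) (use assms in auto)
  finally show ?thesis .
qed

lemma prod_remove_upd:
  assumes "finite A" "i0 \<in> A"
  shows "(\<Prod>i\<in>A. p i ((\<sigma>(i0:=a)) i)) = p i0 a * (\<Prod>i\<in>A - {i0}. p i (\<sigma> i))"
proof -
  have "(\<Prod>i\<in>A. p i ((\<sigma>(i0:=a)) i)) = p i0 a * (\<Prod>i\<in>A - {i0}. p i ((\<sigma>(i0:=a)) i))"
    using assms by (simp add: prod.remove)
  also have "(\<Prod>i\<in>A - {i0}. p i ((\<sigma>(i0:=a)) i)) = (\<Prod>i\<in>A - {i0}. p i (\<sigma> i))"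
    by (rule prod.cong) auto
  finally show ?thesis .
qed

lemma split_one:
  assumes "i1 \<in> {1..n}"
  shows "Phi n k f p = (\<Sum>a\<in>{0..k}. p i1 a * Psi1 n k f p i1 a)"
  unfolding Phi_def Psi1_def sum_distrib_left
  by (subst sum_PiE_remove[OF _ assms], simp, intro sum.cong refl, subst prod_remove_upd[OF _ assms])
     (auto simp: sum_distrib_left mult.assoc mult.left_commute)

lemma split_two:
  assumes "i1 \<in> {1..n}" "i2 \<in> {1..n}" "i1 \<noteq> i2"
  shows "Phi n k f p = (\<Sum>a\<in>{0..k}. \<Sum>b\<in>{0..k}. p i1 a * p i2 b * Psi2 n k f p i1 i2 a b)"
proof -
  have i2: "i2 \<in> {1..n} - {i1}" using assms by auto
  have "Psi1 n k f p i1 a = (\<Sum>b\<in>{0..k}. p i2 b * Psi2 n k f p i1 i2 a b)" for a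
    unfolding Psi1_def Psi2_def sum_distrib_left
    by (subst sum_PiE_remove[OF _ i2], simp, intro sum.cong refl, subst prod_remove_upd[OF _ i2])
     (auto simp: sum_distrib_left mult.assoc mult.left_commute)
  thus ?thesis unfolding split_one[OF assms(1)]
    by (simp add: sum_distrib_left mult.assoc)
qed

definition dl :: "nat \<Rightarrow> nat \<Rightarrow> nat \<Rightarrow> real" where
  "dl a0 a1 a = (if a = a0 then 1 else 0) - (if a = a1 then 1 else 0)"

lemma delta_sum:
  assumes "finite B" "a0 \<in> B" "a1 \<in> B"
  shows "(\<Sum>a\<in>B. dl a0 a1 a * H a) = H a0 - H a1"
proof -
  have "(\<Sum>a\<in>B. dl a0 a1 a * H a) = (\<Sum>a\<in>B. (if a = a0 then H a else 0)) - (\<Sum>a\<in>B. (if a = a1 then H a else 0))"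
    unfolding sum_subtractf[symmetric] by (intro sum.cong refl) (simp add: dl_def)
  also have "\<dots> = H a0 - H a1" using assms by (simp add: sum.delta')
  finally show ?thesis .
qed

lemma shift1:
  assumes "finite B" "a0 \<in> B" "a1 \<in> B"
  shows "(\<Sum>a\<in>B. (p a + t * dl a0 a1 a) * H a) = (\<Sum>a\<in>B. p a * H a) + t * (H a0 - H a1)"
proof -
  have "(\<Sum>a\<in>B. (p a + t * dl a0 a1 a) * H a) = (\<Sum>a\<in>B. p a * H a) + t * (\<Sum>a\<in>B. dl a0 a1 a * H a)"
    by (simp add: distrib_right sum.distrib sum_distrib_left mult.assoc)
  thus ?thesis using delta_sum[OF assms] by simp
qed

lemma bilin:
  assumes "finite B" "a0 \<in> B" "a1 \<in> B" "b0 \<in> B" "b1 \<in> B"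
  shows "(\<Sum>a\<in>B. \<Sum>b\<in>B. (p a + t * dl a0 a1 a) * (q b + s * dl b0 b1 b) * H a b)
    = (\<Sum>a\<in>B. \<Sum>b\<in>B. p a * q b * H a b) + t * (\<Sum>b\<in>B. q b * (H a0 b - H a1 b))
      + s * (\<Sum>a\<in>B. p a * (H a b0 - H a b1)) + t * s * (H a0 b0 - H a1 b0 - H a0 b1 + H a1 b1)"
proof -
  define K where "K a = (\<Sum>b\<in>B. q b * H a b) + s * (H a b0 - H a b1)" for a
  have inner: "(\<Sum>b\<in>B. (p a + t * dl a0 a1 a) * (q b + s * dl b0 b1 b) * H a b) = (p a + t * dl a0 a1 a) * K a" for a
  proof -
    have "(\<Sum>b\<in>B. (p a + t * dl a0 a1 a) * (q b + s * dl b0 b1 b) * H a b)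
       = (p a + t * dl a0 a1 a) * (\<Sum>b\<in>B. (q b + s * dl b0 b1 b) * H a b)"
      by (simp add: sum_distrib_left mult.assoc)
    also have "(\<Sum>b\<in>B. (q b + s * dl b0 b1 b) * H a b) = K a"
      unfolding K_def by (rule shift1) (use assms in auto)
    finally show ?thesis .
  qed
  have "(\<Sum>a\<in>B. \<Sum>b\<in>B. (p a + t * dl a0 a1 a) * (q b + s * dl b0 b1 b) * H a b)
     = (\<Sum>a\<in>B. (p a + t * dl a0 a1 a) * K a)" by (simp add: inner)
  also have "\<dots> = (\<Sum>a\<in>B. p a * K a) + t * (K a0 - K a1)"
    by (rule shift1) (use assms in auto)
  also have "(\<Sum>a\<in>B. p a * K a) = (\<Sum>a\<in>B. \<Sum>b\<in>B. p a * q b * H a b) + s * (\<Sum>a\<in>B. p a * (H a b0 - H a b1))"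
    unfolding K_def by (simp add: distrib_left sum.distrib sum_distrib_left mult.assoc mult.left_commute)
  also have "K a0 - K a1 = (\<Sum>b\<in>B. q b * (H a0 b - H a1 b)) + s * (H a0 b0 - H a1 b0 - H a0 b1 + H a1 b1)"
    unfolding K_def by (simp add: algebra_simps sum_subtractf)
  finally show ?thesis by (simp add: algebra_simps)
qed

lemma Psi1_cong:
  assumes "\<And>i l. i \<in> {1..n} - {i1} \<Longrightarrow> p' i l = p i l"
  shows "Psi1 n k f p' i1 a = Psi1 n k f p i1 a"
  unfolding Psi1_def by (intro sum.cong refl arg_cong2[where f="(*)"] prod.cong) (use assms in auto)

lemma Psi2_cong:
  assumes "\<And>i l. i \<in> {1..n} - {i1} - {i2} \<Longrightarrow> p' i l = p i l"
  shows "Psi2 n k f p' i1 i2 a b = Psi2 n k f p i1 i2 a b"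
  unfolding Psi2_def by (intro sum.cong refl arg_cong2[where f="(*)"] prod.cong) (use assms in auto)

lemma Phi_shift1:
  assumes "i1 \<in> {1..n}" "a0 \<in> {0..k}" "a1 \<in> {0..k}"
    and "\<And>l. p' i1 l = p i1 l + t * dl a0 a1 l"
    and "\<And>i l. i \<in> {1..n} - {i1} \<Longrightarrow> p' i l = p i l"
  shows "Phi n k f p' = Phi n k f p + t * (Psi1 n k f p i1 a0 - Psi1 n k f p i1 a1)"
proof -
  have "Phi n k f p' = (\<Sum>a\<in>{0..k}. (p i1 a + t * dl a0 a1 a) * Psi1 n k f p i1 a)"
    using Psi1_cong[of n i1 p' p k f] assms(5) by (simp add: split_one[OF assms(1)] assms(4))
  also have "\<dots> = Phi n k f p + t * (Psi1 n k f p i1 a0 - Psi1 n k f p i1 a1)"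
    unfolding split_one[OF assms(1), of k f p] by (rule shift1) (use assms in auto)
  finally show ?thesis .
qed

lemma Phi_shift2:
  assumes "i1 \<in> {1..n}" "i2 \<in> {1..n}" "i1 \<noteq> i2"
    "a0 \<in> {0..k}" "a1 \<in> {0..k}" "b0 \<in> {0..k}" "b1 \<in> {0..k}"
    and "\<And>l. p' i1 l = p i1 l + t * dl a0 a1 l"
    and "\<And>l. p' i2 l = p i2 l + s * dl b0 b1 l"
    and "\<And>i l. i \<in> {1..n} - {i1} - {i2} \<Longrightarrow> p' i l = p i l"
  shows "Phi n k f p' = Phi n k f p
      + t * (\<Sum>b\<in>{0..k}. p i2 b * (Psi2 n k f p i1 i2 a0 b - Psi2 n k f p i1 i2 a1 b))
      + s * (\<Sum>a\<in>{0..k}. p i1 a * (Psi2 n k f p i1 i2 a b0 - Psi2 n k f p i1 i2 a b1))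
      + t * s * (Psi2 n k f p i1 i2 a0 b0 - Psi2 n k f p i1 i2 a1 b0 - Psi2 n k f p i1 i2 a0 b1 + Psi2 n k f p i1 i2 a1 b1)"
proof -
  have "Phi n k f p' = (\<Sum>a\<in>{0..k}. \<Sum>b\<in>{0..k}. (p i1 a + t * dl a0 a1 a) * (p i2 b + s * dl b0 b1 b) * Psi2 n k f p i1 i2 a b)"
    using Psi2_cong[of n i1 i2 p' p k f] assms(10) by (simp add: split_two[OF assms(1-3)] assms(8,9))
  note 1 = this
  show ?thesis unfolding 1 split_two[OF assms(1-3), of k f p] by (rule bilin) (use assms in auto)
qed

lemma pw_add: "pw k (\<lambda>a b. x a b + h a b) i l = pw k x i l + (if l = 0 then - (\<Sum>j\<in>{1..k}. h i j) else h i l)"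
  by (simp add: pw_def sum.distrib)

lemma sum_eb: "j1 \<in> {1..k} \<Longrightarrow> (\<Sum>j\<in>{1..k}. ebasis i1 j1 i j) = (if i = i1 then 1 else 0)"
  by (simp add: ebasis_def)

lemma pw_line:
  assumes "j1 \<in> {1..k}" "j2 \<in> {1..k}"
  shows "pw k (\<lambda>a b. x a b + t * (ebasis i1 j1 a b - ebasis i2 j2 a b)) i l
     = pw k x i l + t * ((if i = i1 then dl j1 0 l else 0) - (if i = i2 then dl j2 0 l else 0))"
proof -
  have s: "(\<Sum>j\<in>{1..k}. t * (ebasis i1 j1 i j - ebasis i2 j2 i j)) = t * ((if i = i1 then 1 else 0) - (if i = i2 then 1 else 0))"
    using sum_eb[OF assms(1), of i1 i] sum_eb[OF assms(2), of i2 i]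
    by (simp add: sum_distrib_left[symmetric] sum_subtractf)
  show ?thesis unfolding pw_add s using assms by (auto simp: dl_def ebasis_def)
qed

lemma pw_dir:
  assumes "j \<in> {1..k}"
  shows "pw k (\<lambda>a b. x a b + t * ebasis i j a b) i' l = pw k x i' l + t * (if i' = i then dl j 0 l else 0)"
proof -
  have s: "(\<Sum>j'\<in>{1..k}. t * ebasis i j i' j') = t * (if i' = i then 1 else 0)"
    using sum_eb[OF assms(1), of i i'] by (simp add: sum_distrib_left[symmetric])
  show ?thesis unfolding pw_add s using assms by (auto simp: dl_def ebasis_def)
qed

lemma deriv_lin:
  assumes "\<And>s. g s = c + s * P"
  shows "deriv g 0 = (P::real)"
proof -
  have "g = (\<lambda>s. c + s * P)" using assms by auto
  moreover have "((\<lambda>s. c + s * P) has_real_derivative P) (at 0)"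
    by (auto intro!: derivative_eq_intros)
  ultimately show ?thesis by (simp add: DERIV_imp_deriv)
qed

lemma pw_nonneg:
  assumes "polytopeP n k x" "i \<in> {1..n}" "l \<in> {0..k}"
  shows "0 \<le> pw k x i l"
  using assms unfolding polytopeP_def pw_def by auto

lemma pw_sum1: "(\<Sum>l\<in>{0..k}. pw k x i l) = 1"
proof -
  have e: "{0..k} = insert 0 {1..k}" by auto
  have "(\<Sum>l\<in>{1..k}. pw k x i l) = (\<Sum>l\<in>{1..k}. x i l)"
    by (rule sum.cong) (auto simp: pw_def)
  thus ?thesis unfolding e by (subst sum.insert) (auto simp: pw_def)
qed

lemma weights_sum:
  assumes "A \<subseteq> {1..n}"
  shows "(\<Sum>\<sigma>\<in>A \<rightarrow>\<^sub>E {0..k}. \<Prod>i\<in>A. pw k x i (\<sigma> i)) = 1"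
proof -
  have "finite A" using assms finite_subset by blast
  hence "(\<Prod>i\<in>A. \<Sum>l\<in>{0..k}. pw k x i l) = (\<Sum>\<sigma>\<in>A \<rightarrow>\<^sub>E {0..k}. \<Prod>i\<in>A. pw k x i (\<sigma> i))"
    by (rule prod_sum_PiE) auto
  thus ?thesis by (simp add: pw_sum1)
qed

lemma weights_nonneg:
  assumes "polytopeP n k x" "A \<subseteq> {1..n}" "\<sigma> \<in> A \<rightarrow>\<^sub>E {0..k}"
  shows "0 \<le> (\<Prod>i\<in>A. pw k x i (\<sigma> i))"
  by (rule prod_nonneg) (use assms pw_nonneg in blast)

lemma convex_bound:
  fixes w d :: "'a \<Rightarrow> real"
  assumes "finite W" "\<And>\<sigma>. \<sigma> \<in> W \<Longrightarrow> 0 \<le> w \<sigma>" "sum w W = 1"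
    "\<And>\<sigma>. \<sigma> \<in> W \<Longrightarrow> 0 \<le> d \<sigma> \<and> d \<sigma> \<le> 1"
  shows "0 \<le> (\<Sum>\<sigma>\<in>W. w \<sigma> * d \<sigma>) \<and> (\<Sum>\<sigma>\<in>W. w \<sigma> * d \<sigma>) \<le> 1"
proof
  show "0 \<le> (\<Sum>\<sigma>\<in>W. w \<sigma> * d \<sigma>)" using assms by (intro sum_nonneg) auto
  have "(\<Sum>\<sigma>\<in>W. w \<sigma> * d \<sigma>) \<le> (\<Sum>\<sigma>\<in>W. w \<sigma>)"
    using assms by (intro sum_mono) (simp add: mult_left_le)
  thus "(\<Sum>\<sigma>\<in>W. w \<sigma> * d \<sigma>) \<le> 1" using assms by simp
qed

lemma tup_upd:
  assumes "\<tau> i0 = 0" "i0 \<in> {1..n}" "j \<in> {1..k}"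
  shows "tup n k (\<tau>(i0:=j)) = (tup n k \<tau>)(j := insert i0 (tup n k \<tau> j))"
proof (rule ext)
  fix j' show "tup n k (\<tau>(i0:=j)) j' = ((tup n k \<tau>)(j := insert i0 (tup n k \<tau> j))) j'"
  proof (cases "j' = j")
    case True thus ?thesis using assms by (auto simp: tup_def)
  next
    case False
    show ?thesis
    proof (cases "j' \<in> {1..k}")
      case True
      have "tup n k (\<tau>(i0:=j)) j' = {i\<in>{1..n}. (\<tau>(i0:=j)) i = j'}" using True by (simp add: tup_def)
      also have "\<dots> = {i\<in>{1..n}. \<tau> i = j'}" using False True assms by auto
      finally show ?thesis using False True by (simp add: tup_def)
    next
      case F2: False
      thus ?thesis using False by (simp add: tup_out)
    qed
  qed
qed

lemma marg_bound:
  assumes M: "\<And>S e j. S \<in> ktuples n k \<Longrightarrow> e \<in> {1..n} \<Longrightarrow> e \<notin> support k S \<Longrightarrow> j \<in> {1..k} \<Longrightarrow>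
           0 \<le> marginal f e j S \<and> marginal f e j S \<le> 1"
    and "\<tau> ee = 0" "ee \<in> {1..n}" "j \<in> {1..k}"
  shows "0 \<le> f (tup n k (\<tau>(ee:=j))) - f (tup n k \<tau>) \<and> f (tup n k (\<tau>(ee:=j))) - f (tup n k \<tau>) \<le> 1"
proof -
  have "f (tup n k (\<tau>(ee:=j))) - f (tup n k \<tau>) = marginal f ee j (tup n k \<tau>)"
    unfolding marginal_def tup_upd[of \<tau> ee n j k, OF assms(2-4)] ..
  moreover have "ee \<notin> support k (tup n k \<tau>)" using assms(2) by (simp add: support_tup)
  ultimately show ?thesis using M[OF tup_ktuples assms(3) _ assms(4)] by simp
qed

lemma submod_pt:
  assumes ks: "k_submodular n k f" and "i1 \<noteq> i2" "i1 \<in> {1..n}" "i2 \<in> {1..n}"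
    "j1 \<in> {1..k}" "j2 \<in> {1..k}" "\<tau> i1 = 0" "\<tau> i2 = 0"
  shows "f (tup n k (\<tau>(i2:=j2, i1:=j1))) + f (tup n k \<tau>) \<le> f (tup n k (\<tau>(i1:=j1))) + f (tup n k (\<tau>(i2:=j2)))"
proof -
  let ?S1 = "tup n k (\<tau>(i1:=j1))" and ?S2 = "tup n k (\<tau>(i2:=j2))"
  have meet: "tmeet k ?S1 ?S2 = tup n k \<tau>"
  proof (rule ext)
    fix j show "tmeet k ?S1 ?S2 j = tup n k \<tau> j"
    proof (cases "j \<in> {1..k}")
      case True thus ?thesis using assms unfolding tmeet_def tup_def by auto
    next
      case False thus ?thesis unfolding tmeet_def by (simp only: if_not_P[OF False] tup_out[OF False] if_False)
    qed
  qed
  have join: "tjoin k ?S1 ?S2 = tup n k (\<tau>(i2:=j2, i1:=j1))"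
  proof (rule ext)
    fix j show "tjoin k ?S1 ?S2 j = tup n k (\<tau>(i2:=j2, i1:=j1)) j"
    proof (cases "j \<in> {1..k}")
      case True
      have "tjoin k ?S1 ?S2 j = (?S1 j \<union> ?S2 j) - (\<Union>l\<in>{1..k} - {j}. ?S1 l \<union> ?S2 l)"
        using True unfolding tjoin_def by simp
      also have "\<dots> = {i\<in>{1..n}. (\<tau>(i2:=j2, i1:=j1)) i = j}"
      proof (rule set_eqI)
        fix i
        show "i \<in> (?S1 j \<union> ?S2 j) - (\<Union>l\<in>{1..k} - {j}. ?S1 l \<union> ?S2 l) \<longleftrightarrow> i \<in> {i\<in>{1..n}. (\<tau>(i2:=j2, i1:=j1)) i = j}"
        proof (cases "i = i1")
          case True thus ?thesis using assms \<open>j \<in> {1..k}\<close> by (auto simp: tup_def)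
        next
          case F1: False
          show ?thesis
          proof (cases "i = i2")
            case True thus ?thesis using assms \<open>j \<in> {1..k}\<close> F1 by (auto simp: tup_def)
          next
            case False
            thus ?thesis using assms \<open>j \<in> {1..k}\<close> F1 by (auto simp: tup_def)
          qed
        qed
      qed
      finally show ?thesis using True by (simp add: tup_def)
    next
      case False thus ?thesis unfolding tjoin_def by (simp only: if_not_P[OF False] tup_out[OF False] if_False)
    qed
  qed
  have "f (tmeet k ?S1 ?S2) + f (tjoin k ?S1 ?S2) \<le> f ?S1 + f ?S2"
    using ks tup_ktuples unfolding k_submodular_def by blast
  thus ?thesis unfolding meet join by simp
qed

lemma exp_le_quad:
  fixes y :: real assumes "\<bar>y\<bar> \<le> 1" shows "exp y \<le> 1 + y + y\<^sup>2"
proof (cases "y \<ge> 0")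
  case True then show ?thesis using exp_bound assms by auto
next
  case False
  define u where "u = - y"
  have u: "0 < u" "u \<le> 1" using False assms u_def by auto
  have "exp u \<ge> 1 + u" by (rule exp_ge_add_one_self)
  have pos: "1 - u + u\<^sup>2 > 0" using u by (simp add: power2_eq_square) (smt (verit) mult_pos_pos)
  have "(1 - u + u\<^sup>2) * exp u \<ge> (1 - u + u\<^sup>2) * (1 + u)"
    using \<open>exp u \<ge> 1 + u\<close> pos by (intro mult_left_mono) auto
  also have "(1 - u + u\<^sup>2) * (1 + u) = 1 + u^3" by (simp add: algebra_simps power2_eq_square power3_eq_cube)
  also have "\<dots> \<ge> 1" using u by simp
  finally have "(1 - u + u\<^sup>2) * exp u \<ge> 1" .
  hence "exp (-u) \<le> 1 - u + u\<^sup>2"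
    by (simp add: exp_minus field_simps)
  thus ?thesis using u_def by simp
qed

lemma final_ineq:
  fixes F0 Fb Fg P1 P2 C \<beta> \<gamma> lam :: real
  assumes Fb: "Fb = F0 + \<beta> * (P1 - P2) + \<beta>\<^sup>2 * C"
    and Fg: "Fg = F0 + (-\<gamma>) * (P1 - P2) + (-\<gamma>)\<^sup>2 * C"
    and C: "C \<ge> 0" and P: "0 \<le> P1" "P1 \<le> 1" "0 \<le> P2" "P2 \<le> 1"
    and bg: "\<beta> \<ge> 0" "\<gamma> \<ge> 0" "0 < \<beta> + \<gamma>" "\<beta> + \<gamma> \<le> 1"
    and l: "0 \<le> lam" "lam \<le> 1"
  shows "\<gamma> / (\<beta> + \<gamma>) * exp (lam * (F0 - Fb)) + \<beta> / (\<beta> + \<gamma>) * exp (lam * (F0 - Fg))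
       \<le> exp (lam\<^sup>2 * \<beta> * \<gamma> * (P2 - P1)\<^sup>2)"
proof -
  define D where "D = P1 - P2"
  have D: "\<bar>D\<bar> \<le> 1" using P D_def by auto
  define y1 where "y1 = - lam * \<beta> * D"
  define y2 where "y2 = lam * \<gamma> * D"
  have b1: "\<beta> \<le> 1" "\<gamma> \<le> 1" using bg by auto
  have lb: "lam * \<beta> \<le> 1" "0 \<le> lam * \<beta>" using l bg b1 mult_le_one[of lam \<beta>] by auto
  have ay1: "\<bar>y1\<bar> \<le> 1" unfolding y1_def
    using lb D mult_le_one[of "lam * \<beta>" "\<bar>D\<bar>"] l bg by (simp add: abs_mult)
  have lg: "lam * \<gamma> \<le> 1" "0 \<le> lam * \<gamma>" using l bg b1 mult_le_one[of lam \<gamma>] by auto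
  have ay2: "\<bar>y2\<bar> \<le> 1" unfolding y2_def
    using lg D mult_le_one[of "lam * \<gamma>" "\<bar>D\<bar>"] l bg by (simp add: abs_mult)
  have e1: "exp (lam * (F0 - Fb)) \<le> exp y1"
  proof -
    have "lam * (F0 - Fb) = y1 - lam * \<beta>\<^sup>2 * C" unfolding Fb y1_def D_def by (simp add: algebra_simps)
    also have "\<dots> \<le> y1" using l C by simp
    finally show ?thesis by simp
  qed
  have e2: "exp (lam * (F0 - Fg)) \<le> exp y2"
  proof -
    have "lam * (F0 - Fg) = y2 - lam * \<gamma>\<^sup>2 * C" unfolding Fg y2_def D_def by (simp add: algebra_simps)
    also have "\<dots> \<le> y2" using l C by simp
    finally show ?thesis by simp
  qed
  have w: "\<gamma> / (\<beta> + \<gamma>) \<ge> 0" "\<beta> / (\<beta> + \<gamma>) \<ge> 0" using bg by auto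
  have "\<gamma> / (\<beta> + \<gamma>) * exp (lam * (F0 - Fb)) + \<beta> / (\<beta> + \<gamma>) * exp (lam * (F0 - Fg))
      \<le> \<gamma> / (\<beta> + \<gamma>) * (1 + y1 + y1\<^sup>2) + \<beta> / (\<beta> + \<gamma>) * (1 + y2 + y2\<^sup>2)"
    using order_trans[OF e1 exp_le_quad[OF ay1]] order_trans[OF e2 exp_le_quad[OF ay2]] w
    by (intro add_mono mult_left_mono) auto
  also have "\<dots> = 1 + lam\<^sup>2 * \<beta> * \<gamma> * (P2 - P1)\<^sup>2"
  proof -
    have poly: "\<gamma> * (1 + y1 + y1\<^sup>2) + \<beta> * (1 + y2 + y2\<^sup>2) = (\<beta> + \<gamma>) * (1 + lam\<^sup>2 * \<beta> * \<gamma> * (P2 - P1)\<^sup>2)"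
      unfolding y1_def y2_def D_def by (simp add: power2_eq_square algebra_simps)
    have "\<gamma> / (\<beta> + \<gamma>) * (1 + y1 + y1\<^sup>2) + \<beta> / (\<beta> + \<gamma>) * (1 + y2 + y2\<^sup>2)
        = (\<gamma> * (1 + y1 + y1\<^sup>2) + \<beta> * (1 + y2 + y2\<^sup>2)) / (\<beta> + \<gamma>)"
      by (simp add: add_divide_distrib)
    also have "\<dots> = 1 + lam\<^sup>2 * \<beta> * \<gamma> * (P2 - P1)\<^sup>2" unfolding poly using bg by simp
    finally show ?thesis .
  qed
  also have "\<dots> \<le> exp (lam\<^sup>2 * \<beta> * \<gamma> * (P2 - P1)\<^sup>2)" by (rule exp_ge_add_one_self)
  finally show ?thesis .
qed

lemma Psi2_lin:
  "Psi2 n k f p i1 i2 a b = (\<Sum>\<sigma>\<in>({1..n} - {i1} - {i2}) \<rightarrow>\<^sub>E {0..k}.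
       (\<Prod>i\<in>{1..n} - {i1} - {i2}. p i (\<sigma> i)) * f (tup n k (\<sigma>(i2:=b, i1:=a))))"
  unfolding Psi2_def by (simp add: mult.commute)

lemma Psi1_lin:
  "Psi1 n k f p i1 a = (\<Sum>\<sigma>\<in>({1..n} - {i1}) \<rightarrow>\<^sub>E {0..k}.
       (\<Prod>i\<in>{1..n} - {i1}. p i (\<sigma> i)) * f (tup n k (\<sigma>(i1:=a))))"
  unfolding Psi1_def by (simp add: mult.commute)

lemma Psi2_bound_a:
  assumes M: "\<And>S e j. S \<in> ktuples n k \<Longrightarrow> e \<in> {1..n} \<Longrightarrow> e \<notin> support k S \<Longrightarrow> j \<in> {1..k} \<Longrightarrow>
           0 \<le> marginal f e j S \<and> marginal f e j S \<le> 1"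
    and P: "polytopeP n k x" and "i1 \<in> {1..n}" "j1 \<in> {1..k}"
  shows "0 \<le> Psi2 n k f (pw k x) i1 i2 j1 b - Psi2 n k f (pw k x) i1 i2 0 b
       \<and> Psi2 n k f (pw k x) i1 i2 j1 b - Psi2 n k f (pw k x) i1 i2 0 b \<le> 1"
proof -
  let ?W = "({1..n} - {i1} - {i2}) \<rightarrow>\<^sub>E {0..k}" and ?w = "\<lambda>\<sigma>. \<Prod>i\<in>{1..n} - {i1} - {i2}. pw k x i (\<sigma> i)"
  have "Psi2 n k f (pw k x) i1 i2 j1 b - Psi2 n k f (pw k x) i1 i2 0 b
     = (\<Sum>\<sigma>\<in>?W. ?w \<sigma> * (f (tup n k (\<sigma>(i2:=b, i1:=j1))) - f (tup n k (\<sigma>(i2:=b, i1:=0)))))"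
    unfolding Psi2_lin by (simp add: sum_subtractf[symmetric] right_diff_distrib)
  also have "0 \<le> \<dots> \<and> \<dots> \<le> 1"
  proof (rule convex_bound)
    show "finite ?W" by (simp add: finite_PiE)
    show "0 \<le> ?w \<sigma>" if "\<sigma> \<in> ?W" for \<sigma> by (rule weights_nonneg[OF P _ that]) auto
    show "sum ?w ?W = 1" by (rule weights_sum) auto
    show "0 \<le> f (tup n k (\<sigma>(i2:=b, i1:=j1))) - f (tup n k (\<sigma>(i2:=b, i1:=0)))
        \<and> f (tup n k (\<sigma>(i2:=b, i1:=j1))) - f (tup n k (\<sigma>(i2:=b, i1:=0))) \<le> 1" for \<sigma>
      using marg_bound[OF M, where \<tau>="\<sigma>(i2:=b, i1:=0)" and ee=i1 and j=j1] assms by simp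
  qed
  finally show ?thesis .
qed

lemma Psi2_bound_b:
  assumes M: "\<And>S e j. S \<in> ktuples n k \<Longrightarrow> e \<in> {1..n} \<Longrightarrow> e \<notin> support k S \<Longrightarrow> j \<in> {1..k} \<Longrightarrow>
           0 \<le> marginal f e j S \<and> marginal f e j S \<le> 1"
    and P: "polytopeP n k x" and "i2 \<in> {1..n}" "j2 \<in> {1..k}" "i1 \<noteq> i2"
  shows "0 \<le> Psi2 n k f (pw k x) i1 i2 a j2 - Psi2 n k f (pw k x) i1 i2 a 0
       \<and> Psi2 n k f (pw k x) i1 i2 a j2 - Psi2 n k f (pw k x) i1 i2 a 0 \<le> 1"
proof -
  let ?W = "({1..n} - {i1} - {i2}) \<rightarrow>\<^sub>E {0..k}" and ?w = "\<lambda>\<sigma>. \<Prod>i\<in>{1..n} - {i1} - {i2}. pw k x i (\<sigma> i)"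
  have "Psi2 n k f (pw k x) i1 i2 a j2 - Psi2 n k f (pw k x) i1 i2 a 0
     = (\<Sum>\<sigma>\<in>?W. ?w \<sigma> * (f (tup n k (\<sigma>(i2:=j2, i1:=a))) - f (tup n k (\<sigma>(i2:=0, i1:=a)))))"
    unfolding Psi2_lin by (simp add: sum_subtractf[symmetric] right_diff_distrib)
  also have "0 \<le> \<dots> \<and> \<dots> \<le> 1"
  proof (rule convex_bound)
    show "finite ?W" by (simp add: finite_PiE)
    show "0 \<le> ?w \<sigma>" if "\<sigma> \<in> ?W" for \<sigma> by (rule weights_nonneg[OF P _ that]) auto
    show "sum ?w ?W = 1" by (rule weights_sum) auto
    fix \<sigma>
    have e: "\<sigma>(i2:=0, i1:=a, i2:=j2) = \<sigma>(i2:=j2, i1:=a)" using assms by (auto simp: fun_eq_iff)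
    show "0 \<le> f (tup n k (\<sigma>(i2:=j2, i1:=a))) - f (tup n k (\<sigma>(i2:=0, i1:=a)))
        \<and> f (tup n k (\<sigma>(i2:=j2, i1:=a))) - f (tup n k (\<sigma>(i2:=0, i1:=a))) \<le> 1"
      using marg_bound[OF M, where \<tau>="\<sigma>(i2:=0, i1:=a)" and ee=i2 and j=j2] assms unfolding e by simp
  qed
  finally show ?thesis .
qed

lemma Psi1_bound:
  assumes M: "\<And>S e j. S \<in> ktuples n k \<Longrightarrow> e \<in> {1..n} \<Longrightarrow> e \<notin> support k S \<Longrightarrow> j \<in> {1..k} \<Longrightarrow>
           0 \<le> marginal f e j S \<and> marginal f e j S \<le> 1"
    and P: "polytopeP n k x" and "i1 \<in> {1..n}" "j1 \<in> {1..k}"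
  shows "0 \<le> Psi1 n k f (pw k x) i1 j1 - Psi1 n k f (pw k x) i1 0
       \<and> Psi1 n k f (pw k x) i1 j1 - Psi1 n k f (pw k x) i1 0 \<le> 1"
proof -
  let ?W = "({1..n} - {i1}) \<rightarrow>\<^sub>E {0..k}" and ?w = "\<lambda>\<sigma>. \<Prod>i\<in>{1..n} - {i1}. pw k x i (\<sigma> i)"
  have "Psi1 n k f (pw k x) i1 j1 - Psi1 n k f (pw k x) i1 0
     = (\<Sum>\<sigma>\<in>?W. ?w \<sigma> * (f (tup n k (\<sigma>(i1:=j1))) - f (tup n k (\<sigma>(i1:=0)))))"
    unfolding Psi1_lin by (simp add: sum_subtractf[symmetric] right_diff_distrib)
  also have "0 \<le> \<dots> \<and> \<dots> \<le> 1"
  proof (rule convex_bound)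
    show "finite ?W" by (simp add: finite_PiE)
    show "0 \<le> ?w \<sigma>" if "\<sigma> \<in> ?W" for \<sigma> by (rule weights_nonneg[OF P _ that]) auto
    show "sum ?w ?W = 1" by (rule weights_sum) auto
    show "0 \<le> f (tup n k (\<sigma>(i1:=j1))) - f (tup n k (\<sigma>(i1:=0)))
        \<and> f (tup n k (\<sigma>(i1:=j1))) - f (tup n k (\<sigma>(i1:=0))) \<le> 1" for \<sigma>
      using marg_bound[OF M, where \<tau>="\<sigma>(i1:=0)" and ee=i1 and j=j1] assms by simp
  qed
  finally show ?thesis .
qed

lemma Psi2_C:
  assumes ks: "k_submodular n k f" and P: "polytopeP n k x"
    and "i1 \<noteq> i2" "i1 \<in> {1..n}" "i2 \<in> {1..n}" "j1 \<in> {1..k}" "j2 \<in> {1..k}"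
  shows "0 \<le> Psi2 n k f (pw k x) i1 i2 j1 0 - Psi2 n k f (pw k x) i1 i2 0 0
              - Psi2 n k f (pw k x) i1 i2 j1 j2 + Psi2 n k f (pw k x) i1 i2 0 j2"
proof -
  let ?W = "({1..n} - {i1} - {i2}) \<rightarrow>\<^sub>E {0..k}" and ?w = "\<lambda>\<sigma>. \<Prod>i\<in>{1..n} - {i1} - {i2}. pw k x i (\<sigma> i)"
  let ?G = "\<lambda>a b \<sigma>. f (tup n k (\<sigma>(i2:=b, i1:=a)))"
  have "Psi2 n k f (pw k x) i1 i2 j1 0 - Psi2 n k f (pw k x) i1 i2 0 0
              - Psi2 n k f (pw k x) i1 i2 j1 j2 + Psi2 n k f (pw k x) i1 i2 0 j2
     = (\<Sum>\<sigma>\<in>?W. ?w \<sigma> * (?G j1 0 \<sigma> - ?G 0 0 \<sigma> - ?G j1 j2 \<sigma> + ?G 0 j2 \<sigma>))"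
    unfolding Psi2_lin by (simp add: sum_subtractf[symmetric] sum.distrib[symmetric] algebra_simps)
  also have "0 \<le> \<dots>"
  proof (rule sum_nonneg)
    fix \<sigma> assume s: "\<sigma> \<in> ?W"
    have "0 \<le> ?w \<sigma>" by (rule weights_nonneg[OF P _ s]) auto
    moreover have "0 \<le> ?G j1 0 \<sigma> - ?G 0 0 \<sigma> - ?G j1 j2 \<sigma> + ?G 0 j2 \<sigma>"
    proof -
      define \<tau> where "\<tau> = \<sigma>(i2:=0, i1:=0)"
      have t: "\<tau> i1 = 0" "\<tau> i2 = 0" unfolding \<tau>_def by auto
      have e1: "\<tau>(i2:=j2, i1:=j1) = \<sigma>(i2:=j2, i1:=j1)" unfolding \<tau>_def by (auto simp: fun_eq_iff)
      have e2: "\<tau>(i1:=j1) = \<sigma>(i2:=0, i1:=j1)" unfolding \<tau>_def by (auto simp: fun_eq_iff)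
      have e3: "\<tau>(i2:=j2) = \<sigma>(i2:=j2, i1:=0)" unfolding \<tau>_def using assms by (auto simp: fun_eq_iff)
      show ?thesis using submod_pt[OF ks assms(3-7) t] unfolding e1 e2 e3 \<tau>_def[symmetric] fun_upd_upd by linarith
    qed
    ultimately show "0 \<le> ?w \<sigma> * (?G j1 0 \<sigma> - ?G 0 0 \<sigma> - ?G j1 j2 \<sigma> + ?G 0 j2 \<sigma>)" by simp
  qed
  finally show ?thesis .
qed

lemma line_facts:
  fixes n k :: nat and f :: "(nat \<Rightarrow> nat set) \<Rightarrow> real"
    and x :: "nat \<Rightarrow> nat \<Rightarrow> real" and i1 j1 i2 j2 :: nat
  assumes ks: "k_submodular n k f"
    and M: "\<And>S e j. S \<in> ktuples n k \<Longrightarrow> e \<in> {1..n} \<Longrightarrow> e \<notin> support k S \<Longrightarrow> j \<in> {1..k} \<Longrightarrow>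
           0 \<le> marginal f e j S \<and> marginal f e j S \<le> 1"
    and P: "polytopeP n k x"
    and i1: "i1 \<in> {1..n}" and j1: "j1 \<in> {1..k}" and i2: "i2 \<in> {1..n}" and j2: "j2 \<in> {1..k}"
    and ne: "(i1, j1) \<noteq> (i2, j2)"
  shows "\<exists>C P1 P2. C \<ge> 0 \<and> 0 \<le> P1 \<and> P1 \<le> 1 \<and> 0 \<le> P2 \<and> P2 \<le> 1 \<and>
    (\<forall>t. multilinear_ext n k f (\<lambda>a b. x a b + t * (ebasis i1 j1 a b - ebasis i2 j2 a b))
          = multilinear_ext n k f x + t * (P1 - P2) + t\<^sup>2 * C) \<and>
    (\<forall>s. multilinear_ext n k f (\<lambda>a b. x a b + s * ebasis i1 j1 a b) = multilinear_ext n k f x + s * P1) \<and>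
    (\<forall>s. multilinear_ext n k f (\<lambda>a b. x a b + s * ebasis i2 j2 a b) = multilinear_ext n k f x + s * P2)"
proof (cases "i1 = i2")
  case False
  define p where "p = pw k x"
  let ?\<Psi> = "Psi2 n k f p i1 i2"
  define P1 where "P1 = (\<Sum>b\<in>{0..k}. p i2 b * (?\<Psi> j1 b - ?\<Psi> 0 b))"
  define P2 where "P2 = (\<Sum>a\<in>{0..k}. p i1 a * (?\<Psi> a j2 - ?\<Psi> a 0))"
  define C where "C = ?\<Psi> j1 0 - ?\<Psi> 0 0 - ?\<Psi> j1 j2 + ?\<Psi> 0 j2"
  have j0: "j1 \<in> {0..k}" "j2 \<in> {0..k}" "0 \<in> {0..k}" "j1 \<noteq> 0" "j2 \<noteq> 0" using j1 j2 by auto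
  have line: "multilinear_ext n k f (\<lambda>a b. x a b + t * (ebasis i1 j1 a b - ebasis i2 j2 a b))
          = multilinear_ext n k f x + t * (P1 - P2) + t\<^sup>2 * C" for t
  proof -
    have "Phi n k f (pw k (\<lambda>a b. x a b + t * (ebasis i1 j1 a b - ebasis i2 j2 a b))) = Phi n k f p
      + t * (\<Sum>b\<in>{0..k}. p i2 b * (?\<Psi> j1 b - ?\<Psi> 0 b))
      + t * (\<Sum>a\<in>{0..k}. p i1 a * (?\<Psi> a 0 - ?\<Psi> a j2))
      + t * t * (?\<Psi> j1 0 - ?\<Psi> 0 0 - ?\<Psi> j1 j2 + ?\<Psi> 0 j2)"
      by (rule Phi_shift2[OF i1 i2 False j0(1,3,3,2)])
         (use False in \<open>simp_all add: pw_line[OF j1 j2] p_def dl_def\<close>)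
    moreover have "(\<Sum>a\<in>{0..k}. p i1 a * (?\<Psi> a 0 - ?\<Psi> a j2)) = - P2"
      unfolding P2_def by (simp add: sum_negf[symmetric] algebra_simps)
    ultimately show ?thesis unfolding multilin_Phi p_def P1_def C_def
      by (simp add: power2_eq_square algebra_simps)
  qed
  have dir1: "multilinear_ext n k f (\<lambda>a b. x a b + s * ebasis i1 j1 a b) = multilinear_ext n k f x + s * P1" for s
  proof -
    have "Phi n k f (pw k (\<lambda>a b. x a b + s * ebasis i1 j1 a b)) = Phi n k f p
      + s * (\<Sum>b\<in>{0..k}. p i2 b * (?\<Psi> j1 b - ?\<Psi> 0 b))
      + 0 * (\<Sum>a\<in>{0..k}. p i1 a * (?\<Psi> a 0 - ?\<Psi> a j2))
      + s * 0 * (?\<Psi> j1 0 - ?\<Psi> 0 0 - ?\<Psi> j1 j2 + ?\<Psi> 0 j2)"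
      by (rule Phi_shift2[OF i1 i2 False j0(1,3,3,2)])
         (use False in \<open>simp_all add: pw_dir[OF j1] p_def dl_def\<close>)
    thus ?thesis unfolding multilin_Phi p_def P1_def by simp
  qed
  have dir2: "multilinear_ext n k f (\<lambda>a b. x a b + s * ebasis i2 j2 a b) = multilinear_ext n k f x + s * P2" for s
  proof -
    have "Phi n k f (pw k (\<lambda>a b. x a b + s * ebasis i2 j2 a b)) = Phi n k f p
      + 0 * (\<Sum>b\<in>{0..k}. p i2 b * (?\<Psi> j1 b - ?\<Psi> 0 b))
      + s * (\<Sum>a\<in>{0..k}. p i1 a * (?\<Psi> a j2 - ?\<Psi> a 0))
      + 0 * s * (?\<Psi> j1 j2 - ?\<Psi> 0 j2 - ?\<Psi> j1 0 + ?\<Psi> 0 0)"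
      by (rule Phi_shift2[OF i1 i2 False j0(1,3,2,3)])
         (use False in \<open>simp_all add: pw_dir[OF j2] p_def dl_def\<close>)
    thus ?thesis unfolding multilin_Phi p_def P2_def by simp
  qed
  have pb: "0 \<le> P1 \<and> P1 \<le> 1"
    unfolding P1_def
    by (rule convex_bound) (use Psi2_bound_a[OF M P i1 j1] pw_nonneg[OF P i2] pw_sum1 in \<open>auto simp: p_def\<close>)
  have pb2: "0 \<le> P2 \<and> P2 \<le> 1"
    unfolding P2_def
    by (rule convex_bound) (use Psi2_bound_b[OF M P i2 j2 False] pw_nonneg[OF P i1] pw_sum1 in \<open>auto simp: p_def\<close>)
  have "C \<ge> 0" unfolding C_def p_def using Psi2_C[OF ks P False i1 i2 j1 j2] .
  thus ?thesis using pb pb2 line dir1 dir2 by blast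
next
  case True
  hence jne: "j1 \<noteq> j2" using ne by simp
  define p where "p = pw k x"
  let ?\<Psi> = "Psi1 n k f p i1"
  define P1 where "P1 = ?\<Psi> j1 - ?\<Psi> 0"
  define P2 where "P2 = ?\<Psi> j2 - ?\<Psi> 0"
  have j0: "j1 \<in> {0..k}" "j2 \<in> {0..k}" "0 \<in> {0..k}" "j1 \<noteq> 0" "j2 \<noteq> 0" using j1 j2 by auto
  have line: "multilinear_ext n k f (\<lambda>a b. x a b + t * (ebasis i1 j1 a b - ebasis i2 j2 a b))
          = multilinear_ext n k f x + t * (P1 - P2) + t\<^sup>2 * 0" for t
  proof -
    have "Phi n k f (pw k (\<lambda>a b. x a b + t * (ebasis i1 j1 a b - ebasis i2 j2 a b))) = Phi n k f p
      + t * (?\<Psi> j1 - ?\<Psi> j2)"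
      by (rule Phi_shift1[OF i1 j0(1,2)])
         (use True j0 in \<open>simp_all add: pw_line[OF j1 j2] p_def dl_def\<close>)
    thus ?thesis unfolding multilin_Phi p_def P1_def P2_def by (simp add: algebra_simps)
  qed
  have dir1: "multilinear_ext n k f (\<lambda>a b. x a b + s * ebasis i1 j1 a b) = multilinear_ext n k f x + s * P1" for s
  proof -
    have "Phi n k f (pw k (\<lambda>a b. x a b + s * ebasis i1 j1 a b)) = Phi n k f p + s * (?\<Psi> j1 - ?\<Psi> 0)"
      by (rule Phi_shift1[OF i1 j0(1,3)]) (simp_all add: pw_dir[OF j1] p_def)
    thus ?thesis unfolding multilin_Phi p_def P1_def by simp
  qed
  have dir2: "multilinear_ext n k f (\<lambda>a b. x a b + s * ebasis i2 j2 a b) = multilinear_ext n k f x + s * P2" for s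
  proof -
    have "Phi n k f (pw k (\<lambda>a b. x a b + s * ebasis i2 j2 a b)) = Phi n k f p + s * (?\<Psi> j2 - ?\<Psi> 0)"
      by (rule Phi_shift1[OF i1 j0(2,3)]) (use True in \<open>simp_all add: pw_dir[OF j2] p_def\<close>)
    thus ?thesis unfolding multilin_Phi p_def P2_def by simp
  qed
  have "0 \<le> P1 \<and> P1 \<le> 1" unfolding P1_def p_def by (rule Psi1_bound[OF M P i1 j1])
  moreover have "0 \<le> P2 \<and> P2 \<le> 1" unfolding P2_def p_def using Psi1_bound[OF M P i1 j2] .
  ultimately show ?thesis using line dir1 dir2
    apply -
    apply (rule exI[where x="0::real"])
    apply (rule exI[where x=P1])
    apply (rule exI[where x=P2])
    by auto
qed

theorem mainTheorem10:
  fixes n k :: nat and f :: "(nat \<Rightarrow> nat set) \<Rightarrow> real"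
    and x :: "nat \<Rightarrow> nat \<Rightarrow> real" and i1 j1 i2 j2 :: nat and \<beta> \<gamma> lam :: real
  assumes "k \<ge> 1"
    and "k_submodular n k f" and "k_monotone n k f"
    and "\<And>S e j. S \<in> ktuples n k \<Longrightarrow> e \<in> {1..n} \<Longrightarrow> e \<notin> support k S \<Longrightarrow> j \<in> {1..k} \<Longrightarrow>
           0 \<le> marginal f e j S \<and> marginal f e j S \<le> 1"
    and "polytopeP n k x"
    and "i1 \<in> {1..n}" "j1 \<in> {1..k}" "i2 \<in> {1..n}" "j2 \<in> {1..k}" "(i1, j1) \<noteq> (i2, j2)"
    and "\<beta> \<ge> 0" "\<gamma> \<ge> 0" "0 < \<beta> + \<gamma>" "\<beta> + \<gamma> \<le> 1"
    and "polytopeP n k (\<lambda>a b. x a b + \<beta> * (ebasis i1 j1 a b - ebasis i2 j2 a b))"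
    and "polytopeP n k (\<lambda>a b. x a b - \<gamma> * (ebasis i1 j1 a b - ebasis i2 j2 a b))"
    and "0 \<le> lam" "lam \<le> 1"
  shows "\<gamma> / (\<beta> + \<gamma>) * exp (lam * (multilinear_ext n k f x
              - multilinear_ext n k f (\<lambda>a b. x a b + \<beta> * (ebasis i1 j1 a b - ebasis i2 j2 a b))))
       + \<beta> / (\<beta> + \<gamma>) * exp (lam * (multilinear_ext n k f x
              - multilinear_ext n k f (\<lambda>a b. x a b - \<gamma> * (ebasis i1 j1 a b - ebasis i2 j2 a b))))
       \<le> exp (lam\<^sup>2 * \<beta> * \<gamma> * (partial (multilinear_ext n k f) i2 j2 x
                                  - partial (multilinear_ext n k f) i1 j1 x)\<^sup>2)"
proof -
  obtain C P1 P2 where C: "C \<ge> 0" and P: "0 \<le> P1" "P1 \<le> 1" "0 \<le> P2" "P2 \<le> 1"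
    and line: "\<And>t. multilinear_ext n k f (\<lambda>a b. x a b + t * (ebasis i1 j1 a b - ebasis i2 j2 a b))
          = multilinear_ext n k f x + t * (P1 - P2) + t\<^sup>2 * C"
    and dir1: "\<And>s. multilinear_ext n k f (\<lambda>a b. x a b + s * ebasis i1 j1 a b) = multilinear_ext n k f x + s * P1"
    and dir2: "\<And>s. multilinear_ext n k f (\<lambda>a b. x a b + s * ebasis i2 j2 a b) = multilinear_ext n k f x + s * P2"
    using line_facts[OF assms(2,4,5,6,7,8,9,10)] by blast
  have pd1: "partial (multilinear_ext n k f) i1 j1 x = P1"
    unfolding partial_def by (rule deriv_lin) (rule dir1)
  have pd2: "partial (multilinear_ext n k f) i2 j2 x = P2"
    unfolding partial_def by (rule deriv_lin) (rule dir2)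
  have eg: "(\<lambda>a b. x a b - \<gamma> * (ebasis i1 j1 a b - ebasis i2 j2 a b))
      = (\<lambda>a b. x a b + (- \<gamma>) * (ebasis i1 j1 a b - ebasis i2 j2 a b))" by simp
  show ?thesis unfolding pd1 pd2 eg
    by (rule final_ineq[OF line line C P]) (use assms in auto)
qed

end
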